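(* Let $(a,b)\subset\mathbb{R}$ be a finite interval, $m,n\in\mathbb{N}$, $\varepsilon_0>0$. For each $\varepsilon\in[0,\varepsilon_0)$ let $A(\cdot;\varepsilon)\in (W^{n-1}_\infty)^{m\times m}$ and let $L(\varepsilon)\colon (W^n_\infty)^m\to(W^{n-1}_\infty)^m$, $L(\varepsilon)y:=y'+A(\cdot;\varepsilon)y$. The following three conditions are equivalent: (I) $A(\cdot;\varepsilon)\to A(\cdot;0)$ in $(W^{n-1}_\infty)^{m\times m}$ as $\varepsilon\to0+$; $(a_1)$ $\|L(\varepsilon)-L(0)\|\to0$ as $\varepsilon\to0+$, where $\|\cdot\|$ is the operator norm from $(W^n_\infty)^m$ to $(W^{n-1}_\infty)^m$; $(a_2)$ $L(\varepsilon)y\to L(0)y$ in $(W^{n-1}_\infty)^m$ as $\varepsilon\to0+$ for every $y\in(W^n_\infty)^m$.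
   Context: For an integer $k\ge0$, $W^k_\infty=W^k_\infty([a,b];\mathbb{C})$ is the Sobolev space of complex functions on $[a,b]$ whose derivatives up to order $k$ are essentially bounded, with norm $\|y\|_{k,\infty}=\sum_{j=0}^k\|y^{(j)}\|_{L_\infty}$; $W^0_\infty=L_\infty$. $(W^k_\infty)^m$, $(W^k_\infty)^{m\times m}$ denote vector/matrix functions with components in $W^k_\infty$, normed componentwise. *)

theory Defs
  imports "HOL-Analysis.Analysis" "HOL-Probability.Essential_Supremum"
begin

text \<open>Sobolev space W^k_infinity([a,b];C), following the paper's convention:
  y^(k-1) absolutely continuous and y^(k) essentially bounded (for k = 0: y in L_infinity).
  g j plays the role of y^(j), j = 0..k.\<close>

definition sob_derivs :: "real \<Rightarrow> real \<Rightarrow> nat \<Rightarrow> (real \<Rightarrow> complex) \<Rightarrow> (nat \<Rightarrow> real \<Rightarrow> complex) \<Rightarrow> bool" where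
  "sob_derivs a b k f g \<longleftrightarrow>
     (\<forall>x\<in>{a..b}. g 0 x = f x) \<and>
     (\<forall>j<k. g (Suc j) absolutely_integrable_on {a..b} \<and>
            (\<forall>x\<in>{a..b}. g j x = g j a + integral {a..x} (g (Suc j)))) \<and>
     g k \<in> borel_measurable (lebesgue_on {a..b}) \<and>
     (\<exists>C. AE x in lebesgue_on {a..b}. norm (g k x) \<le> C)"

definition Wsob :: "real \<Rightarrow> real \<Rightarrow> nat \<Rightarrow> (real \<Rightarrow> complex) \<Rightarrow> bool" where
  "Wsob a b k f \<longleftrightarrow> (\<exists>g. sob_derivs a b k f g)"

definition Linf_norm :: "real \<Rightarrow> real \<Rightarrow> (real \<Rightarrow> complex) \<Rightarrow> real" where
  "Linf_norm a b f = real_of_ereal (esssup (lebesgue_on {a..b}) (\<lambda>x. ereal (norm (f x))))"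

definition sob_deriv :: "real \<Rightarrow> real \<Rightarrow> nat \<Rightarrow> nat \<Rightarrow> (real \<Rightarrow> complex) \<Rightarrow> real \<Rightarrow> complex" where
  "sob_deriv a b k j f = (SOME g. sob_derivs a b k f g) j"

definition sob_norm :: "real \<Rightarrow> real \<Rightarrow> nat \<Rightarrow> (real \<Rightarrow> complex) \<Rightarrow> real" where
  "sob_norm a b k f = (\<Sum>j\<le>k. Linf_norm a b (sob_deriv a b k j f))"

definition vW :: "real \<Rightarrow> real \<Rightarrow> nat \<Rightarrow> (real \<Rightarrow> complex^'m) \<Rightarrow> bool" where
  "vW a b k y \<longleftrightarrow> (\<forall>i. Wsob a b k (\<lambda>x. y x $ i))"

definition vnorm :: "real \<Rightarrow> real \<Rightarrow> nat \<Rightarrow> (real \<Rightarrow> complex^'m) \<Rightarrow> real" where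
  "vnorm a b k y = (\<Sum>i\<in>UNIV. sob_norm a b k (\<lambda>x. y x $ i))"

definition mW :: "real \<Rightarrow> real \<Rightarrow> nat \<Rightarrow> (real \<Rightarrow> complex^'m^'m) \<Rightarrow> bool" where
  "mW a b k A \<longleftrightarrow> (\<forall>i j. Wsob a b k (\<lambda>x. A x $ i $ j))"

definition mnorm :: "real \<Rightarrow> real \<Rightarrow> nat \<Rightarrow> (real \<Rightarrow> complex^'m^'m) \<Rightarrow> real" where
  "mnorm a b k A = (\<Sum>i\<in>UNIV. \<Sum>j\<in>UNIV. sob_norm a b k (\<lambda>x. A x $ i $ j))"

definition Lop :: "real \<Rightarrow> real \<Rightarrow> nat \<Rightarrow> (real \<Rightarrow> complex^'m^'m) \<Rightarrow> (real \<Rightarrow> complex^'m) \<Rightarrow> real \<Rightarrow> complex^'m" where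
  "Lop a b n A y x = (\<chi> i. sob_deriv a b n 1 (\<lambda>t. y t $ i) x) + A x *v y x"

definition opnorm :: "real \<Rightarrow> real \<Rightarrow> nat \<Rightarrow> ((real \<Rightarrow> complex^'m) \<Rightarrow> (real \<Rightarrow> complex^'m)) \<Rightarrow> ereal" where
  "opnorm a b n T = Sup {ereal (vnorm a b (n - 1) (T y)) | y. vW a b n y \<and> vnorm a b n y \<le> 1}"

end

theory Submission
  imports Defs
begin

definition EB :: "real \<Rightarrow> real \<Rightarrow> (real \<Rightarrow> complex) \<Rightarrow> bool" where
  "EB a b f \<longleftrightarrow> f \<in> borel_measurable (lebesgue_on {a..b}) \<and> (\<exists>C. AE x in lebesgue_on {a..b}. norm (f x) \<le> C)"

lemma emeas_pos:
  fixes a b :: real assumes "a < b"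
  shows "emeasure (lebesgue_on {a..b}) (space (lebesgue_on {a..b})) \<noteq> 0"
  using assms by (simp add: emeasure_restrict_space)

lemma esssup_nonneg:
  fixes a b :: real assumes "a < b"
  shows "esssup (lebesgue_on {a..b}) (\<lambda>x. ereal (norm (f x))) \<ge> 0"
proof -
  have "esssup (lebesgue_on {a..b}) (\<lambda>x. (0::ereal)) \<le> esssup (lebesgue_on {a..b}) (\<lambda>x. ereal (norm (f x)))"
    by (rule esssup_mono) auto
  moreover have "esssup (lebesgue_on {a..b}) (\<lambda>x. (0::ereal)) = 0"
    by (rule esssup_const[OF emeas_pos[OF assms]])
  ultimately show ?thesis by simp
qed

lemma Linf_nonneg:
  fixes a b :: real assumes "a < b"
  shows "Linf_norm a b f \<ge> 0"
  using esssup_nonneg[OF assms, of f] unfolding Linf_norm_def by (simp add: real_of_ereal_pos)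

lemma Linf_le:
  fixes a b :: real assumes "a < b" "f \<in> borel_measurable (lebesgue_on {a..b})" "C \<ge> 0"
    "AE x in lebesgue_on {a..b}. norm (f x) \<le> C"
  shows "Linf_norm a b f \<le> C"
proof -
  have "esssup (lebesgue_on {a..b}) (\<lambda>x. ereal (norm (f x))) \<le> ereal C"
    using assms(2,4) by (intro esssup_I) auto
  moreover note esssup_nonneg[OF assms(1), of f]
  ultimately show ?thesis unfolding Linf_norm_def
    by (cases "esssup (lebesgue_on {a..b}) (\<lambda>x. ereal (norm (f x)))") (auto simp: assms)
qed

lemma Linf_AE:
  fixes a b :: real assumes "a < b" "EB a b f"
  shows "AE x in lebesgue_on {a..b}. norm (f x) \<le> Linf_norm a b f"
proof -
  obtain C where C: "AE x in lebesgue_on {a..b}. norm (f x) \<le> C" and m: "f \<in> borel_measurable (lebesgue_on {a..b})"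
    using assms(2) unfolding EB_def by blast
  define D where "D = max C 0"
  have "AE x in lebesgue_on {a..b}. norm (f x) \<le> D" using C unfolding D_def by eventually_elim auto
  then have "AE x in lebesgue_on {a..b}. ereal (norm (f x)) \<le> ereal D"
    by eventually_elim simp
  then have le: "esssup (lebesgue_on {a..b}) (\<lambda>x. ereal (norm (f x))) \<le> ereal D"
    using m by (intro esssup_I) auto
  note ge = esssup_nonneg[OF assms(1), of f]
  from le ge obtain r where r: "esssup (lebesgue_on {a..b}) (\<lambda>x. ereal (norm (f x))) = ereal r"
    by (cases "esssup (lebesgue_on {a..b}) (\<lambda>x. ereal (norm (f x)))") auto
  have "AE x in lebesgue_on {a..b}. ereal (norm (f x)) \<le> esssup (lebesgue_on {a..b}) (\<lambda>x. ereal (norm (f x)))"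
    by (rule esssup_AE)
  then show ?thesis unfolding Linf_norm_def r by eventually_elim auto
qed

lemma Linf_cong:
  assumes "AE x in lebesgue_on {a..b}. f x = g x"
    "f \<in> borel_measurable (lebesgue_on {a..b})" "g \<in> borel_measurable (lebesgue_on {a..b})"
  shows "Linf_norm a b f = Linf_norm a b g"
proof -
  have "AE x in lebesgue_on {a..b}. ereal (norm (f x)) = ereal (norm (g x))"
    using assms(1) by eventually_elim auto
  moreover have m1: "(\<lambda>x. ereal (norm (f x))) \<in> borel_measurable (lebesgue_on {a..b})"
    using assms(2) by simp
  moreover have m2: "(\<lambda>x. ereal (norm (g x))) \<in> borel_measurable (lebesgue_on {a..b})"
    using assms(3) by simp
  ultimately show ?thesis unfolding Linf_norm_def using esssup_AE_cong by metis
qed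

lemma EB_add: "EB a b f \<Longrightarrow> EB a b g \<Longrightarrow> EB a b (\<lambda>x. f x + g x)"
  unfolding EB_def
proof (elim conjE exE, intro conjI)
  fix C D assume "AE x in lebesgue_on {a..b}. norm (f x) \<le> C" "AE x in lebesgue_on {a..b}. norm (g x) \<le> D"
  then have "AE x in lebesgue_on {a..b}. norm (f x + g x) \<le> C + D"
    by eventually_elim (meson add_mono norm_triangle_le)
  then show "\<exists>C. AE x in lebesgue_on {a..b}. norm (f x + g x) \<le> C" by blast
qed auto

lemma EB_mult: "EB a b f \<Longrightarrow> EB a b g \<Longrightarrow> EB a b (\<lambda>x. f x * g x)"
  unfolding EB_def
proof (elim conjE exE, intro conjI)
  fix C D assume "AE x in lebesgue_on {a..b}. norm (f x) \<le> C" "AE x in lebesgue_on {a..b}. norm (g x) \<le> D"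
  then have "AE x in lebesgue_on {a..b}. norm (f x * g x) \<le> C * D"
    by eventually_elim (simp add: norm_mult mult_mono')
  then show "\<exists>C. AE x in lebesgue_on {a..b}. norm (f x * g x) \<le> C" by blast
qed auto

lemma EB_const: "EB a b (\<lambda>x. c)"
  unfolding EB_def by auto

lemma EB_cmult: "EB a b f \<Longrightarrow> EB a b (\<lambda>x. c * f x)"
  using EB_mult[OF EB_const] by blast

lemma EB_sum: "(\<And>i. i \<in> I \<Longrightarrow> EB a b (f i)) \<Longrightarrow> EB a b (\<lambda>x. \<Sum>i\<in>I. f i x)"
proof (induction I rule: infinite_finite_induct)
  case (infinite A) then show ?case by (simp add: EB_const)
next
  case empty then show ?case by (simp add: EB_const)
next
  case (insert x F) then show ?case by (simp add: EB_add)
qed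

lemma Linf_add:
  assumes "a < b" "EB a b f" "EB a b g"
  shows "Linf_norm a b (\<lambda>x. f x + g x) \<le> Linf_norm a b f + Linf_norm a b g"
proof (rule Linf_le[OF assms(1)])
  show "(\<lambda>x. f x + g x) \<in> borel_measurable (lebesgue_on {a..b})" using assms EB_def by auto
  show "0 \<le> Linf_norm a b f + Linf_norm a b g" using Linf_nonneg[OF assms(1)] by (simp add: add_nonneg_nonneg)
  show "AE x in lebesgue_on {a..b}. norm (f x + g x) \<le> Linf_norm a b f + Linf_norm a b g"
    using Linf_AE[OF assms(1,2)] Linf_AE[OF assms(1,3)] by eventually_elim (meson add_mono norm_triangle_le)
qed

lemma Linf_mult:
  assumes "a < b" "EB a b f" "EB a b g"
  shows "Linf_norm a b (\<lambda>x. f x * g x) \<le> Linf_norm a b f * Linf_norm a b g"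
proof (rule Linf_le[OF assms(1)])
  show "(\<lambda>x. f x * g x) \<in> borel_measurable (lebesgue_on {a..b})" using assms EB_def by auto
  show "0 \<le> Linf_norm a b f * Linf_norm a b g" using Linf_nonneg[OF assms(1)] by simp
  show "AE x in lebesgue_on {a..b}. norm (f x * g x) \<le> Linf_norm a b f * Linf_norm a b g"
    using Linf_AE[OF assms(1,2)] Linf_AE[OF assms(1,3)]
    by eventually_elim (simp add: norm_mult mult_mono')
qed

lemma Linf_cmult:
  assumes "a < b" "EB a b f"
  shows "Linf_norm a b (\<lambda>x. c * f x) \<le> norm c * Linf_norm a b f"
proof (rule Linf_le[OF assms(1)])
  show "(\<lambda>x. c * f x) \<in> borel_measurable (lebesgue_on {a..b})" using assms EB_def by auto
  show "0 \<le> norm c * Linf_norm a b f" using Linf_nonneg[OF assms(1)] by simp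
  show "AE x in lebesgue_on {a..b}. norm (c * f x) \<le> norm c * Linf_norm a b f"
    using Linf_AE[OF assms(1,2)] by eventually_elim (simp add: norm_mult mult_left_mono)
qed

lemma Linf_const:
  assumes "a < b" shows "Linf_norm a b (\<lambda>x. c) \<le> norm c"
  by (rule Linf_le[OF assms]) auto

lemma Linf_sum:
  assumes "a < b" "\<And>i. i \<in> I \<Longrightarrow> EB a b (f i)"
  shows "Linf_norm a b (\<lambda>x. \<Sum>i\<in>I. f i x) \<le> (\<Sum>i\<in>I. Linf_norm a b (f i))"
  using assms(2)
proof (induction I rule: infinite_finite_induct)
  case (infinite A) then show ?case using Linf_const[OF assms(1), of 0] by simp
next
  case empty then show ?case using Linf_const[OF assms(1), of 0] by simp
next
  case (insert x F)
  have "Linf_norm a b (\<lambda>y. \<Sum>i\<in>insert x F. f i y) = Linf_norm a b (\<lambda>y. f x y + (\<Sum>i\<in>F. f i y))"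
    using insert by simp
  also have "\<dots> \<le> Linf_norm a b (f x) + Linf_norm a b (\<lambda>y. \<Sum>i\<in>F. f i y)"
  proof -
    have "EB a b (\<lambda>y. \<Sum>i\<in>F. f i y)" by (rule EB_sum) (use insert in auto)
    then show ?thesis using Linf_add[OF assms(1), of "f x" "\<lambda>y. \<Sum>i\<in>F. f i y"] insert by auto
  qed
  also have "\<dots> \<le> Linf_norm a b (f x) + (\<Sum>i\<in>F. Linf_norm a b (f i))"
    using insert by auto
  finally show ?case using insert by simp
qed

lemma ennreal_pm: "ennreal r = ennreal (-r) \<Longrightarrow> r = (0::real)"
proof (cases "r \<ge> 0")
  case True
  assume h: "ennreal r = ennreal (-r)"
  have "ennreal (-r) = 0" using True by (simp add: ennreal_neg)
  then have "r \<le> 0" using h ennreal_eq_0_iff by metis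
  then show ?thesis using True by simp
next
  case False
  assume h: "ennreal r = ennreal (-r)"
  have "ennreal r = 0" using False by (simp add: ennreal_neg)
  then have "-r \<le> 0" using h ennreal_eq_0_iff by metis
  then show ?thesis using False by simp
qed

lemma zero_core:
  fixes u :: "real \<Rightarrow> real"
  assumes int: "integrable lebesgue u"
    and hc: "\<And>c. (\<integral>x. indicator {c<..} x * u x \<partial>lebesgue) = 0"
  shows "AE x in lebesgue. u x = 0"
proof -
  have um: "u \<in> borel_measurable (completion lborel)" using int by auto
  obtain w where wm: "w \<in> borel_measurable lborel" and uw: "AE x in lborel. u x = w x"
    using completion_ex_borel_measurable_real[OF um] by blast
  have uwl: "AE x in lebesgue. u x = w x" using AE_completion[OF uw] .
  have intwl: "integrable lebesgue w"
    using integrable_cong_AE_imp[OF int _ uwl] wm by (simp add: measurable_completion)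
  have intw: "integrable lborel w" using intwl integrable_completion[of w lborel] wm by simp
  have hw: "(\<integral>x. indicator {c<..} x * w x \<partial>lborel) = 0" for c
  proof -
    have "(\<integral>x. indicator {c<..} x * w x \<partial>lborel) = (\<integral>x. indicator {c<..} x * w x \<partial>lebesgue)"
      using wm by (simp add: integral_completion)
    also have "\<dots> = (\<integral>x. indicator {c<..} x * u x \<partial>lebesgue)"
    proof (rule integral_cong_AE)
      have [measurable]: "w \<in> borel_measurable lebesgue" by (rule measurable_completion[OF wm])
      have [measurable]: "u \<in> borel_measurable lebesgue" by (rule um)
      have [measurable]: "(\<lambda>x::real. x) \<in> borel_measurable lebesgue"
        using id_borel_measurable_lebesgue by (simp add: id_def)
      show "(\<lambda>x. indicator {c<..} x * w x) \<in> borel_measurable lebesgue" by measurable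
      show "(\<lambda>x. indicator {c<..} x * u x) \<in> borel_measurable lebesgue" by measurable
      show "AE x in lebesgue. indicator {c<..} x * w x = indicator {c<..} x * u x"
        using uwl by eventually_elim auto
    qed
    finally show ?thesis using hc by simp
  qed
  let ?P = "\<lambda>x. ennreal (w x)" and ?N = "\<lambda>x. ennreal (- w x)"
  have finP: "integral\<^sup>N lborel ?P \<noteq> \<infinity>"
  proof -
    have "integral\<^sup>N lborel ?P \<le> integral\<^sup>N lborel (\<lambda>x. ennreal (norm (w x)))"
      by (intro nn_integral_mono) (auto intro: ennreal_leI)
    also have "\<dots> < \<infinity>" using intw by (simp add: integrable_iff_bounded)
    finally show ?thesis by simp
  qed
  have eqm: "density lborel ?P = density lborel ?N"
  proof (rule measure_eqI_lessThan)
    show "sets (density lborel ?P) = sets borel" "sets (density lborel ?N) = sets borel" by auto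
    fix c :: real
    have iP: "integrable lborel (\<lambda>x. indicator {c<..} x * max 0 (w x))"
      using integrable_mult_indicator[of "{c<..}" lborel "\<lambda>x. max 0 (w x)"] intw by auto
    have iN: "integrable lborel (\<lambda>x. indicator {c<..} x * max 0 (- w x))"
      using integrable_mult_indicator[of "{c<..}" lborel "\<lambda>x. max 0 (- w x)"] intw by auto
    have eP: "emeasure (density lborel ?P) {c<..} = ennreal (\<integral>x. indicator {c<..} x * max 0 (w x) \<partial>lborel)"
    proof -
      have "emeasure (density lborel ?P) {c<..} = (\<integral>\<^sup>+x. ennreal (indicator {c<..} x * max 0 (w x)) \<partial>lborel)"
        using wm by (subst emeasure_density) (auto intro!: nn_integral_cong split: split_indicator simp: max_def ennreal_neg)
      also have "\<dots> = ennreal (\<integral>x. indicator {c<..} x * max 0 (w x) \<partial>lborel)"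
        using iP by (intro nn_integral_eq_integral) auto
      finally show ?thesis .
    qed
    have eN: "emeasure (density lborel ?N) {c<..} = ennreal (\<integral>x. indicator {c<..} x * max 0 (- w x) \<partial>lborel)"
    proof -
      have "emeasure (density lborel ?N) {c<..} = (\<integral>\<^sup>+x. ennreal (indicator {c<..} x * max 0 (- w x)) \<partial>lborel)"
        using wm by (subst emeasure_density) (auto intro!: nn_integral_cong split: split_indicator simp: max_def ennreal_neg)
      also have "\<dots> = ennreal (\<integral>x. indicator {c<..} x * max 0 (- w x) \<partial>lborel)"
        using iN by (intro nn_integral_eq_integral) auto
      finally show ?thesis .
    qed
    have "(\<integral>x. indicator {c<..} x * max 0 (w x) \<partial>lborel) - (\<integral>x. indicator {c<..} x * max 0 (- w x) \<partial>lborel)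
          = (\<integral>x. indicator {c<..} x * w x \<partial>lborel)"
    proof -
      have "(\<integral>x. indicator {c<..} x * max 0 (w x) \<partial>lborel) - (\<integral>x. indicator {c<..} x * max 0 (- w x) \<partial>lborel)
          = (\<integral>x. indicator {c<..} x * max 0 (w x) - indicator {c<..} x * max 0 (- w x) \<partial>lborel)"
        by (rule Bochner_Integration.integral_diff[OF iP iN, symmetric])
      also have "\<dots> = (\<integral>x. indicator {c<..} x * w x \<partial>lborel)"
        by (intro Bochner_Integration.integral_cong) (auto simp: max_def algebra_simps)
      finally show ?thesis .
    qed
    then have "(\<integral>x. indicator {c<..} x * max 0 (w x) \<partial>lborel) = (\<integral>x. indicator {c<..} x * max 0 (- w x) \<partial>lborel)"
      using hw[of c] by simp
    then show "emeasure (density lborel ?P) {c<..} = emeasure (density lborel ?N) {c<..}"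
      using eP eN by simp
    show "emeasure (density lborel ?P) {c<..} < \<infinity>" using eP by simp
  qed
  have "AE x in lborel. ?P x = ?N x"
    using finite_density_unique[of ?P lborel ?N] wm finP eqm by auto
  then have "AE x in lborel. w x = 0"
    by eventually_elim (rule ennreal_pm)
  then have "AE x in lebesgue. w x = 0" by (rule AE_completion)
  with uwl show ?thesis by eventually_elim auto
qed

lemma zero_complex:
  fixes u :: "real \<Rightarrow> complex"
  assumes int: "integrable lebesgue u"
    and hc: "\<And>c. (\<integral>x. indicator {c<..} x *\<^sub>R u x \<partial>lebesgue) = 0"
  shows "AE x in lebesgue. u x = 0"
proof -
  have "AE x in lebesgue. Re (u x) = 0"
  proof (rule zero_core)
    show "integrable lebesgue (\<lambda>x. Re (u x))" using int by auto
    fix c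
    have "(\<integral>x. indicator {c<..} x * Re (u x) \<partial>lebesgue) = (\<integral>x. Re (indicator {c<..} x *\<^sub>R u x) \<partial>lebesgue)"
      by simp
    also have "\<dots> = Re (\<integral>x. indicator {c<..} x *\<^sub>R u x \<partial>lebesgue)"
      by (rule integral_Re) (rule integrable_mult_indicator[OF _ int], simp)
    finally show "(\<integral>x. indicator {c<..} x * Re (u x) \<partial>lebesgue) = 0" using hc by simp
  qed
  moreover have "AE x in lebesgue. Im (u x) = 0"
  proof (rule zero_core)
    show "integrable lebesgue (\<lambda>x. Im (u x))" using int by auto
    fix c
    have "(\<integral>x. indicator {c<..} x * Im (u x) \<partial>lebesgue) = (\<integral>x. Im (indicator {c<..} x *\<^sub>R u x) \<partial>lebesgue)"
      by simp
    also have "\<dots> = Im (\<integral>x. indicator {c<..} x *\<^sub>R u x \<partial>lebesgue)"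
      by (rule integral_Im) (rule integrable_mult_indicator[OF _ int], simp)
    finally show "(\<integral>x. indicator {c<..} x * Im (u x) \<partial>lebesgue) = 0" using hc by simp
  qed
  ultimately show ?thesis by eventually_elim (simp add: complex_eq_iff)
qed

lemma zero_interval:
  fixes u :: "real \<Rightarrow> complex"
  assumes ab: "a \<le> b" and ai: "u absolutely_integrable_on {a..b}"
    and h0: "\<forall>x\<in>{a..b}. integral {a..x} u = 0"
  shows "AE x in lebesgue_on {a..b}. u x = 0"
proof -
  let ?v = "\<lambda>x. indicator {a..b} x *\<^sub>R u x"
  have iv: "integrable lebesgue ?v" using ai by (simp add: set_integrable_def)
  have sub: "\<And>S. S \<in> sets lebesgue \<Longrightarrow> S \<subseteq> {a..b} \<Longrightarrow> set_integrable lebesgue S u"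
    using ai set_integrable_subset by blast
  have LI: "\<And>x. x \<in> {a..b} \<Longrightarrow> (LINT t:{a..x}|lebesgue. u t) = 0"
  proof -
    fix x assume x: "x \<in> {a..b}"
    have "(LINT t:{a..x}|lebesgue. u t) = integral {a..x} u"
      using sub[of "{a..x}"] x by (intro set_lebesgue_integral_eq_integral(2)) auto
    then show "(LINT t:{a..x}|lebesgue. u t) = 0" using h0 x by simp
  qed
  have "AE x in lebesgue. ?v x = 0"
  proof (rule zero_complex[OF iv])
    fix c :: real
    have "(\<integral>x. indicator {c<..} x *\<^sub>R ?v x \<partial>lebesgue) = (LINT x:({c<..} \<inter> {a..b})|lebesgue. u x)"
      unfolding set_lebesgue_integral_def
      by (intro Bochner_Integration.integral_cong) (auto split: split_indicator)
    also have "\<dots> = 0"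
    proof (cases "c < a")
      case True
      then have "{c<..} \<inter> {a..b} = {a..b}" by auto
      then show ?thesis using LI[of b] ab by simp
    next
      case False
      show ?thesis
      proof (cases "c \<le> b")
        case True
        have un: "{a..b} = {a..c} \<union> ({c<..} \<inter> {a..b})" using True False by auto
        have s1: "set_integrable lebesgue {a..c} u" using True by (intro sub) auto
        have s2: "set_integrable lebesgue ({c<..} \<inter> {a..b}) u" by (intro sub) auto
        have "(LINT x:{a..b}|lebesgue. u x) = (LINT x:{a..c}|lebesgue. u x) + (LINT x:({c<..} \<inter> {a..b})|lebesgue. u x)"
          by (subst un, rule set_integral_Un[OF _ s1 s2]) auto
        then show ?thesis using LI[of b] LI[of c] ab True False by simp
      next
        case False
        then have "{c<..} \<inter> {a..b} = {}" by auto
        then show ?thesis by (simp add: set_lebesgue_integral_def)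
      qed
    qed
    finally show "(\<integral>x. indicator {c<..} x *\<^sub>R ?v x \<partial>lebesgue) = 0" .
  qed
  then show ?thesis
    by (subst AE_restrict_space_iff) (auto elim!: eventually_mono split: split_indicator)
qed

lemma sob_int: "sob_derivs a b k f g \<Longrightarrow> j < k \<Longrightarrow> g (Suc j) absolutely_integrable_on {a..b}"
  unfolding sob_derivs_def by blast

lemma sob_eq: "sob_derivs a b k f g \<Longrightarrow> j < k \<Longrightarrow> x \<in> {a..b} \<Longrightarrow> g j x = g j a + integral {a..x} (g (Suc j))"
  unfolding sob_derivs_def by blast

lemma sob_0: "sob_derivs a b k f g \<Longrightarrow> x \<in> {a..b} \<Longrightarrow> g 0 x = f x"
  unfolding sob_derivs_def by blast

lemma absint_integrable_on: "f absolutely_integrable_on S \<Longrightarrow> f integrable_on S"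
  for f :: "real \<Rightarrow> complex"
  using set_lebesgue_integral_eq_integral(1) by blast

lemma cont_indef:
  fixes c :: complex and f :: "real \<Rightarrow> complex"
  assumes "f absolutely_integrable_on {a..b}"
  shows "continuous_on {a..b} (\<lambda>x. c + integral {a..x} f)"
  by (rule continuous_on_add[OF continuous_on_const indefinite_integral_continuous_1[OF absint_integrable_on[OF assms]]])

lemma sob_cont: assumes "sob_derivs a b k f g" "j < k" shows "continuous_on {a..b} (g j)"
proof -
  have "continuous_on {a..b} (\<lambda>x. g j a + integral {a..x} (g (Suc j)))"
    by (rule cont_indef[OF sob_int[OF assms]])
  then show ?thesis by (rule continuous_on_eq) (rule sob_eq[OF assms, symmetric])
qed

lemma EB_cont: assumes "continuous_on {a..b} h" shows "EB a b h"
  unfolding EB_def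
proof
  show "h \<in> borel_measurable (lebesgue_on {a..b})"
    by (rule continuous_imp_measurable_on_sets_lebesgue[OF assms]) auto
  have "compact (h ` {a..b})" by (rule compact_continuous_image[OF assms]) auto
  then have "bounded (h ` {a..b})" by (rule compact_imp_bounded)
  then obtain B where "\<forall>y\<in>h ` {a..b}. norm y \<le> B" unfolding bounded_iff by blast
  then have "AE x in lebesgue_on {a..b}. norm (h x) \<le> B" by (intro AE_I2) auto
  then show "\<exists>C. AE x in lebesgue_on {a..b}. norm (h x) \<le> C" by blast
qed

lemma sob_EB: assumes "sob_derivs a b k f g" "j \<le> k" shows "EB a b (g j)"
proof (cases "j < k")
  case True then show ?thesis using EB_cont sob_cont assms by blast
next
  case False then have "j = k" using assms by simp
  then show ?thesis using assms unfolding sob_derivs_def EB_def by blast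
qed

lemma EB_absint: assumes "EB a b h" shows "h absolutely_integrable_on {a..b}"
proof -
  interpret finite_measure "lebesgue_on {a..b}" by (rule finite_measure_lebesgue_on) auto
  obtain C where C: "AE x in lebesgue_on {a..b}. norm (h x) \<le> C" and m: "h \<in> borel_measurable (lebesgue_on {a..b})"
    using assms unfolding EB_def by blast
  have "integrable (lebesgue_on {a..b}) h" by (rule integrable_const_bound[OF C m])
  then show ?thesis by (simp add: integrable_restrict_space set_integrable_def)
qed


lemma cont_AE_zero:
  fixes D :: "real \<Rightarrow> complex"
  assumes ab: "a < b" and c: "continuous_on {a..b} D" and ae: "AE x in lebesgue_on {a..b}. D x = 0"
  shows "\<forall>x\<in>{a..b}. D x = 0"
proof -
  let ?C = "{x \<in> {a..b}. D x = 0}"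
  have cl: "closed ?C" by (rule continuous_closed_preimage_constant[OF c]) simp
  have ae2: "AE x in lebesgue. x \<in> {a..b} \<longrightarrow> D x = 0"
    using ae by (subst (asm) AE_restrict_space_iff) simp_all
  have ae3: "AE x \<in> {a<..<b} in lebesgue. x \<in> ?C"
    using ae2 by (rule eventually_mono) simp
  have inn: "D x = 0" if x: "x \<in> {a<..<b}" for x
  proof -
    have "x \<in> ?C" by (rule mem_closed_if_AE_lebesgue_open[OF _ cl ae3 x]) simp
    then show ?thesis by simp
  qed
  have cc: "closure {a<..<b} = {a..b}" using ab by simp
  show ?thesis
  proof
    fix x assume x: "x \<in> {a..b}"
    have c': "continuous_on (closure {a<..<b}) D" using c cc by simp
    show "D x = 0"
      by (rule continuous_constant_on_closure[OF c' inn]) (use x cc in simp_all)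
  qed
qed

lemma sob_unique:
  assumes ab: "a < b" and g: "sob_derivs a b k f g" and h: "sob_derivs a b k f h"
  shows "j \<le> k \<Longrightarrow> (j < k \<longrightarrow> (\<forall>x\<in>{a..b}. g j x = h j x)) \<and> (AE x in lebesgue_on {a..b}. g j x = h j x)"
proof (induction j)
  case 0
  have e: "\<forall>x\<in>{a..b}. g 0 x = h 0 x" using sob_0[OF g] sob_0[OF h] by auto
  then have "AE x in lebesgue_on {a..b}. g 0 x = h 0 x" by (intro AE_I2) auto
  then show ?case using e by blast
next
  case (Suc j)
  then have jk: "j < k" by simp
  with Suc have IH: "\<forall>x\<in>{a..b}. g j x = h j x" by simp
  have ig: "g (Suc j) absolutely_integrable_on {a..b}" by (rule sob_int[OF g jk])
  have ih: "h (Suc j) absolutely_integrable_on {a..b}" by (rule sob_int[OF h jk])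
  have "\<forall>x\<in>{a..b}. integral {a..x} (\<lambda>t. g (Suc j) t - h (Suc j) t) = 0"
  proof
    fix x assume x: "x \<in> {a..b}"
    have a: "a \<in> {a..b}" using ab by simp
    have "integral {a..x} (g (Suc j)) = integral {a..x} (h (Suc j))"
      using sob_eq[OF g jk x] sob_eq[OF h jk x] IH x a by auto
    moreover have "integral {a..x} (\<lambda>t. g (Suc j) t - h (Suc j) t) = integral {a..x} (g (Suc j)) - integral {a..x} (h (Suc j))"
      using x by (intro integral_diff absint_integrable_on set_integrable_subset[OF ig] set_integrable_subset[OF ih]) auto
    ultimately show "integral {a..x} (\<lambda>t. g (Suc j) t - h (Suc j) t) = 0" by simp
  qed
  then have ae0: "AE x in lebesgue_on {a..b}. g (Suc j) x - h (Suc j) x = 0"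
    using ab by (intro zero_interval) (auto intro: set_integral_diff(1)[OF ig ih])
  then have ae: "AE x in lebesgue_on {a..b}. g (Suc j) x = h (Suc j) x" by eventually_elim simp
  have ev: "Suc j < k \<longrightarrow> (\<forall>x\<in>{a..b}. g (Suc j) x = h (Suc j) x)"
  proof
    assume sk: "Suc j < k"
    have "continuous_on {a..b} (\<lambda>x. g (Suc j) x - h (Suc j) x)"
      by (intro continuous_on_diff sob_cont[OF g sk] sob_cont[OF h sk])
    then show "\<forall>x\<in>{a..b}. g (Suc j) x = h (Suc j) x"
      using cont_AE_zero[OF ab _ ae0] by auto
  qed
  show ?case using ev ae by blast
qed

lemma sob_some: "sob_derivs a b k f g \<Longrightarrow> sob_derivs a b k f (\<lambda>j. sob_deriv a b k j f)"
proof -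
  assume "sob_derivs a b k f g"
  then have "sob_derivs a b k f (SOME g. sob_derivs a b k f g)" by (rule someI[of "\<lambda>g. sob_derivs a b k f g"])
  then show ?thesis unfolding sob_deriv_def by simp
qed

lemma sob_norm_eq:
  assumes ab: "a < b" and g: "sob_derivs a b k f g"
  shows "sob_norm a b k f = (\<Sum>j\<le>k. Linf_norm a b (g j))"
  unfolding sob_norm_def
proof (rule sum.cong)
  fix j assume "j \<in> {..k}"
  then have jk: "j \<le> k" by simp
  have s: "sob_derivs a b k f (\<lambda>j. sob_deriv a b k j f)" by (rule sob_some[OF g])
  have "AE x in lebesgue_on {a..b}. sob_deriv a b k j f x = g j x"
    using sob_unique[OF ab s g jk] by simp
  moreover have "EB a b (\<lambda>x. sob_deriv a b k j f x)" using sob_EB[OF s jk] by simp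
  moreover have "EB a b (g j)" using sob_EB[OF g jk] .
  ultimately show "Linf_norm a b (sob_deriv a b k j f) = Linf_norm a b (g j)"
    unfolding EB_def using Linf_cong[of "sob_deriv a b k j f" "g j" a b] by simp
qed simp

lemma sob_norm_nonneg: "a < b \<Longrightarrow> sob_norm a b k f \<ge> 0"
  unfolding sob_norm_def by (intro sum_nonneg Linf_nonneg)

lemma IR:
  fixes \<phi> :: "real \<Rightarrow> complex"
  assumes ai: "\<phi> absolutely_integrable_on {a..x}" and s: "s \<in> {a..x}"
  shows "integral {a..s} \<phi> = (\<integral>t. (if t \<le> s then \<phi> t else 0) \<partial>lebesgue_on {a..x})"
proof -
  have ai2: "\<phi> absolutely_integrable_on {a..s}" using s by (intro set_integrable_subset[OF ai]) auto
  have "integral {a..s} \<phi> = integral\<^sup>L (lebesgue_on {a..s}) \<phi>"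
    by (rule lebesgue_integral_eq_integral[symmetric]) (auto intro!: absolutely_integrable_imp_integrable ai2)
  also have "\<dots> = integral\<^sup>L (lebesgue_on {a..x}) (\<lambda>t. if t \<in> {a..s} then \<phi> t else 0)"
    by (rule integral_restrict[symmetric]) (use s in auto)
  also have "\<dots> = (\<integral>t. (if t \<le> s then \<phi> t else 0) \<partial>lebesgue_on {a..x})"
    by (intro Bochner_Integration.integral_cong) auto
  finally show ?thesis .
qed

lemma integrable_on_lebesgue_on_absint:
  fixes \<phi> :: "real \<Rightarrow> complex"
  shows "\<phi> absolutely_integrable_on {a..x} \<Longrightarrow> integrable (lebesgue_on {a..x}) \<phi>"
  by (rule absolutely_integrable_imp_integrable) auto

lemma PR_core:
  fixes f g :: "real \<Rightarrow> complex"
  assumes ax: "a \<le> x" and fi: "f absolutely_integrable_on {a..x}" and gc: "continuous_on {a..x} g"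
  shows "integral {a..x} (\<lambda>t. f t * integral {a..t} g) + integral {a..x} (\<lambda>s. integral {a..s} f * g s)
         = integral {a..x} f * integral {a..x} g"
proof -
  let ?M = "lebesgue_on {a..x}"
  interpret finite_measure ?M by (rule finite_measure_lebesgue_on) auto
  interpret P: pair_sigma_finite ?M ?M ..
  have gi: "g absolutely_integrable_on {a..x}" by (rule EB_absint[OF EB_cont[OF gc]])
  have fM: "integrable ?M f" by (rule integrable_on_lebesgue_on_absint[OF fi])
  have gM: "integrable ?M g" by (rule integrable_on_lebesgue_on_absint[OF gi])
  have [measurable]: "f \<in> borel_measurable ?M" "g \<in> borel_measurable ?M" using fM gM by auto
  have [measurable]: "(\<lambda>t::real. t) \<in> borel_measurable ?M"
    using id_borel_measurable_lebesgue_on by (simp add: id_def)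
  define H where "H = (\<lambda>t s. f t * g s)"
  define H1 where "H1 = (\<lambda>t s. if t \<le> s then f t * g s else 0)"
  define H2 where "H2 = (\<lambda>t s. if s < t then f t * g s else 0)"
  have mH: "case_prod H \<in> borel_measurable (?M \<Otimes>\<^sub>M ?M)" unfolding H_def by measurable
  have mH1: "case_prod H1 \<in> borel_measurable (?M \<Otimes>\<^sub>M ?M)" unfolding H1_def by measurable
  have mH2: "case_prod H2 \<in> borel_measurable (?M \<Otimes>\<^sub>M ?M)" unfolding H2_def by measurable
  have iH: "integrable (?M \<Otimes>\<^sub>M ?M) (case_prod H)"
  proof (rule P.Fubini_integrable[OF mH])
    have "integrable ?M (\<lambda>t. norm (f t) * (\<integral>s. norm (g s) \<partial>?M))"
      using fM by (intro integrable_mult_left) auto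
    then show "integrable ?M (\<lambda>t. \<integral>s. norm (case_prod H (t, s)) \<partial>?M)"
      unfolding H_def by (simp add: norm_mult)
    show "AE t in ?M. integrable ?M (\<lambda>s. case_prod H (t, s))"
      unfolding H_def using gM by simp
  qed
  have iH1: "integrable (?M \<Otimes>\<^sub>M ?M) (case_prod H1)"
    by (rule Bochner_Integration.integrable_bound[OF iH mH1]) (auto simp: H_def H1_def)
  have iH2: "integrable (?M \<Otimes>\<^sub>M ?M) (case_prod H2)"
    by (rule Bochner_Integration.integrable_bound[OF iH mH2]) (auto simp: H_def H2_def)
  have HH: "case_prod H = (\<lambda>p. case_prod H1 p + case_prod H2 p)"
    by (auto simp: H_def H1_def H2_def fun_eq_iff)
  have sumI: "integral\<^sup>L (?M \<Otimes>\<^sub>M ?M) (case_prod H) = integral\<^sup>L (?M \<Otimes>\<^sub>M ?M) (case_prod H1) + integral\<^sup>L (?M \<Otimes>\<^sub>M ?M) (case_prod H2)"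
    unfolding HH by (rule Bochner_Integration.integral_add[OF iH1 iH2])
  have I0: "integral\<^sup>L (?M \<Otimes>\<^sub>M ?M) (case_prod H) = integral\<^sup>L ?M f * integral\<^sup>L ?M g"
  proof -
    have "integral\<^sup>L (?M \<Otimes>\<^sub>M ?M) (case_prod H) = (\<integral>t. (\<integral>s. H t s \<partial>?M) \<partial>?M)"
      by (rule P.integral_fst[OF iH, symmetric])
    also have "\<dots> = (\<integral>t. f t * integral\<^sup>L ?M g \<partial>?M)"
      unfolding H_def using gM by simp
    also have "\<dots> = integral\<^sup>L ?M f * integral\<^sup>L ?M g"
      using fM by simp
    finally show ?thesis .
  qed
  have Ft: "\<And>s. s \<in> {a..x} \<Longrightarrow> (\<integral>t. H1 t s \<partial>?M) = integral {a..s} f * g s"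
  proof -
    fix s assume s: "s \<in> {a..x}"
    have "(\<integral>t. H1 t s \<partial>?M) = (\<integral>t. (if t \<le> s then f t else 0) * g s \<partial>?M)"
      unfolding H1_def by (intro Bochner_Integration.integral_cong) auto
    also have "\<dots> = (\<integral>t. (if t \<le> s then f t else 0) \<partial>?M) * g s"
    proof (rule Bochner_Integration.integral_mult_left)
      show "integrable ?M (\<lambda>t. if t \<le> s then f t else 0)"
        by (rule Bochner_Integration.integrable_bound[OF fM]) auto
    qed
    also have "\<dots> = integral {a..s} f * g s" using IR[OF fi s] by simp
    finally show "(\<integral>t. H1 t s \<partial>?M) = integral {a..s} f * g s" .
  qed
  have Gt: "\<And>t. t \<in> {a..x} \<Longrightarrow> (\<integral>s. H2 t s \<partial>?M) = f t * integral {a..t} g"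
  proof -
    fix t assume t: "t \<in> {a..x}"
    have ig1: "integrable ?M (\<lambda>s. if s < t then g s else 0)" by (rule Bochner_Integration.integrable_bound[OF gM]) auto
    have ig2: "integrable ?M (\<lambda>s. if s \<le> t then g s else 0)" by (rule Bochner_Integration.integrable_bound[OF gM]) auto
    have ae: "AE s in ?M. s \<noteq> t"
    proof (rule AE_I')
      show "{t} \<in> null_sets ?M" using t by (subst null_sets_restrict_space) auto
    qed auto
    have "(\<integral>s. H2 t s \<partial>?M) = f t * (\<integral>s. (if s < t then g s else 0) \<partial>?M)"
    proof -
      have "(\<integral>s. H2 t s \<partial>?M) = (\<integral>s. f t * (if s < t then g s else 0) \<partial>?M)"
        unfolding H2_def by (intro Bochner_Integration.integral_cong) auto
      also have "\<dots> = f t * (\<integral>s. (if s < t then g s else 0) \<partial>?M)"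
        by (rule Bochner_Integration.integral_mult_right) (rule ig1)
      finally show ?thesis .
    qed
    also have "(\<integral>s. (if s < t then g s else 0) \<partial>?M) = (\<integral>s. (if s \<le> t then g s else 0) \<partial>?M)"
      by (rule integral_cong_AE) (use ae in \<open>auto elim!: eventually_mono\<close>)
    also have "\<dots> = integral {a..t} g" using IR[OF gi t] by simp
    finally show "(\<integral>s. H2 t s \<partial>?M) = f t * integral {a..t} g" .
  qed
  have I1: "integral\<^sup>L (?M \<Otimes>\<^sub>M ?M) (case_prod H1) = (\<integral>s. integral {a..s} f * g s \<partial>?M)"
  proof -
    have "integral\<^sup>L (?M \<Otimes>\<^sub>M ?M) (case_prod H1) = (\<integral>s. (\<integral>t. H1 t s \<partial>?M) \<partial>?M)"
      by (rule P.integral_snd[OF iH1, symmetric])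
    also have "\<dots> = (\<integral>s. integral {a..s} f * g s \<partial>?M)"
      by (intro Bochner_Integration.integral_cong) (auto simp: Ft)
    finally show ?thesis .
  qed
  have int1: "integrable ?M (\<lambda>s. integral {a..s} f * g s)"
  proof -
    have "integrable ?M (\<lambda>s. \<integral>t. H1 t s \<partial>?M)" by (rule P.integrable_snd[OF iH1])
    moreover have "integrable ?M (\<lambda>s. \<integral>t. H1 t s \<partial>?M) \<longleftrightarrow> integrable ?M (\<lambda>s. integral {a..s} f * g s)"
      by (rule Bochner_Integration.integrable_cong[OF refl]) (auto simp: Ft)
    ultimately show ?thesis by simp
  qed
  have I2: "integral\<^sup>L (?M \<Otimes>\<^sub>M ?M) (case_prod H2) = (\<integral>t. f t * integral {a..t} g \<partial>?M)"
  proof -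
    have "integral\<^sup>L (?M \<Otimes>\<^sub>M ?M) (case_prod H2) = (\<integral>t. (\<integral>s. H2 t s \<partial>?M) \<partial>?M)"
      by (rule P.integral_fst[OF iH2, symmetric])
    also have "\<dots> = (\<integral>t. f t * integral {a..t} g \<partial>?M)"
      by (intro Bochner_Integration.integral_cong) (auto simp: Gt)
    finally show ?thesis .
  qed
  have int2: "integrable ?M (\<lambda>t. f t * integral {a..t} g)"
  proof -
    have "integrable ?M (\<lambda>t. \<integral>s. H2 t s \<partial>?M)" by (rule P.integrable_fst[OF iH2])
    moreover have "integrable ?M (\<lambda>t. \<integral>s. H2 t s \<partial>?M) \<longleftrightarrow> integrable ?M (\<lambda>t. f t * integral {a..t} g)"
      by (rule Bochner_Integration.integrable_cong[OF refl]) (auto simp: Gt)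
    ultimately show ?thesis by simp
  qed
  have e1: "integral {a..x} (\<lambda>s. integral {a..s} f * g s) = (\<integral>s. integral {a..s} f * g s \<partial>?M)"
    by (rule lebesgue_integral_eq_integral[symmetric, OF int1]) auto
  have e2: "integral {a..x} (\<lambda>t. f t * integral {a..t} g) = (\<integral>t. f t * integral {a..t} g \<partial>?M)"
    by (rule lebesgue_integral_eq_integral[symmetric, OF int2]) auto
  have e3: "integral {a..x} f = integral\<^sup>L ?M f" by (rule lebesgue_integral_eq_integral[symmetric, OF fM]) auto
  have e4: "integral {a..x} g = integral\<^sup>L ?M g" by (rule lebesgue_integral_eq_integral[symmetric, OF gM]) auto
  show ?thesis unfolding e1 e2 e3 e4 using sumI I0 I1 I2 by simp
qed

lemma absint_cont_mult:
  fixes f G :: "real \<Rightarrow> complex"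
  assumes fi: "f absolutely_integrable_on {a..b}" and gc: "continuous_on {a..b} G"
  shows "(\<lambda>t. G t * f t) absolutely_integrable_on {a..b}"
proof (rule absolutely_integrable_bounded_measurable_product[OF bilinear_times _ _ _ fi])
  show "G \<in> borel_measurable (lebesgue_on {a..b})"
    by (rule continuous_imp_measurable_on_sets_lebesgue[OF gc]) auto
  show "{a..b} \<in> sets lebesgue" by simp
  show "bounded (G ` {a..b})" by (rule compact_imp_bounded, rule compact_continuous_image[OF gc]) auto
qed

lemma absint_cont_mult':
  fixes f G :: "real \<Rightarrow> complex"
  assumes fi: "f absolutely_integrable_on {a..b}" and gc: "continuous_on {a..b} G"
  shows "(\<lambda>t. f t * G t) absolutely_integrable_on {a..b}"
  using absint_cont_mult[OF assms] by (simp add: mult.commute)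

lemma cont_absint:
  fixes G :: "real \<Rightarrow> complex"
  shows "continuous_on {a..b} G \<Longrightarrow> G absolutely_integrable_on {a..b}"
  by (rule EB_absint[OF EB_cont])

lemma absint_sub:
  fixes f :: "real \<Rightarrow> complex"
  shows "f absolutely_integrable_on {a..b} \<Longrightarrow> x \<le> b \<Longrightarrow> f absolutely_integrable_on {a..x}"
  by (rule set_integrable_subset) auto

lemma PR:
  fixes F G f g :: "real \<Rightarrow> complex"
  assumes ab: "a \<le> b" and fi: "f absolutely_integrable_on {a..b}" and gc: "continuous_on {a..b} g"
    and hF: "\<forall>x\<in>{a..b}. F x = F a + integral {a..x} f"
    and hG: "\<forall>x\<in>{a..b}. G x = G a + integral {a..x} g"
  shows "(\<lambda>t. f t * G t + F t * g t) absolutely_integrable_on {a..b}"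
    and "\<forall>x\<in>{a..b}. F x * G x = F a * G a + integral {a..x} (\<lambda>t. f t * G t + F t * g t)"
proof -
  have gi: "g absolutely_integrable_on {a..b}" by (rule cont_absint[OF gc])
  have Gc: "continuous_on {a..b} G"
    using cont_indef[OF gi, of "G a"] by (rule continuous_on_eq) (rule hG[rule_format, symmetric])
  have Fc: "continuous_on {a..b} F"
    using cont_indef[OF fi, of "F a"] by (rule continuous_on_eq) (rule hF[rule_format, symmetric])
  show "(\<lambda>t. f t * G t + F t * g t) absolutely_integrable_on {a..b}"
    by (intro set_integral_add(1) absint_cont_mult' fi Gc absint_cont_mult gi Fc)
  show "\<forall>x\<in>{a..b}. F x * G x = F a * G a + integral {a..x} (\<lambda>t. f t * G t + F t * g t)"
  proof
    fix x assume x: "x \<in> {a..b}"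
    then have xb: "x \<le> b" and ax: "a \<le> x" by auto
    have fx: "f absolutely_integrable_on {a..x}" by (rule absint_sub[OF fi xb])
    have gcx: "continuous_on {a..x} g" by (rule continuous_on_subset[OF gc]) (use xb in auto)
    have gx: "g absolutely_integrable_on {a..x}" by (rule cont_absint[OF gcx])
    let ?Ft = "\<lambda>t. integral {a..t} f" and ?Gt = "\<lambda>t. integral {a..t} g"
    have Ftc: "continuous_on {a..x} ?Ft" using cont_indef[OF fx, of 0] by simp
    have Gtc: "continuous_on {a..x} ?Gt" using cont_indef[OF gx, of 0] by simp
    have core: "integral {a..x} (\<lambda>t. f t * ?Gt t) + integral {a..x} (\<lambda>s. ?Ft s * g s) = ?Ft x * ?Gt x"
      by (rule PR_core[OF ax fx gcx])
    have i1: "(\<lambda>t. f t * G a + F a * g t) integrable_on {a..x}"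
      by (intro integrable_add integrable_on_mult_left integrable_on_mult_right absint_integrable_on fx gx)
    have i2: "(\<lambda>t. f t * ?Gt t) integrable_on {a..x}"
      by (intro absint_integrable_on absint_cont_mult' fx Gtc)
    have i3: "(\<lambda>t. ?Ft t * g t) integrable_on {a..x}"
      by (intro absint_integrable_on absint_cont_mult fx Ftc gx)
    have "integral {a..x} (\<lambda>t. f t * G t + F t * g t)
        = integral {a..x} (\<lambda>t. (f t * G a + F a * g t) + (f t * ?Gt t + ?Ft t * g t))"
    proof (rule integral_cong)
      fix t assume t: "t \<in> {a..x}"
      then have "t \<in> {a..b}" using xb by auto
      then have "F t = F a + ?Ft t" "G t = G a + ?Gt t" using hF hG by blast+
      then show "f t * G t + F t * g t = (f t * G a + F a * g t) + (f t * ?Gt t + ?Ft t * g t)"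
        by (simp add: algebra_simps)
    qed
    also have "\<dots> = integral {a..x} (\<lambda>t. f t * G a + F a * g t) + (integral {a..x} (\<lambda>t. f t * ?Gt t) + integral {a..x} (\<lambda>t. ?Ft t * g t))"
      using i1 i2 i3 by (simp add: integral_add integrable_add)
    also have "integral {a..x} (\<lambda>t. f t * G a + F a * g t) = ?Ft x * G a + F a * ?Gt x"
      by (subst integral_add) (auto intro!: integrable_on_mult_left integrable_on_mult_right absint_integrable_on fx gx)
    finally have "integral {a..x} (\<lambda>t. f t * G t + F t * g t) = ?Ft x * G a + F a * ?Gt x + ?Ft x * ?Gt x"
      using core by simp
    moreover have "F x = F a + ?Ft x" "G x = G a + ?Gt x" using hF hG x by blast+
    ultimately show "F x * G x = F a * G a + integral {a..x} (\<lambda>t. f t * G t + F t * g t)"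
      by (simp add: algebra_simps)
  qed
qed

lemma pascal_sum:
  fixes b e :: "nat \<Rightarrow> complex"
  shows "(\<Sum>i\<le>j. of_nat (j choose i) * (b (Suc i) * e (j - i) + b i * e (Suc j - i)))
       = (\<Sum>i\<le>Suc j. of_nat (Suc j choose i) * b i * e (Suc j - i))"
proof -
  have A: "(\<Sum>i\<le>j. of_nat (j choose i) * b i * e (Suc j - i)) = (\<Sum>i\<le>Suc j. of_nat (j choose i) * b i * e (Suc j - i))"
    by simp
  also have "\<dots> = b 0 * e (Suc j) + (\<Sum>i\<le>j. of_nat (j choose Suc i) * b (Suc i) * e (j - i))"
    by (subst sum.atMost_Suc_shift) simp
  finally have A': "(\<Sum>i\<le>j. of_nat (j choose i) * b i * e (Suc j - i)) = b 0 * e (Suc j) + (\<Sum>i\<le>j. of_nat (j choose Suc i) * b (Suc i) * e (j - i))" .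
  have "(\<Sum>i\<le>Suc j. of_nat (Suc j choose i) * b i * e (Suc j - i))
      = b 0 * e (Suc j) + (\<Sum>i\<le>j. of_nat (Suc j choose Suc i) * b (Suc i) * e (j - i))"
    by (subst sum.atMost_Suc_shift) simp
  also have "\<dots> = b 0 * e (Suc j) + (\<Sum>i\<le>j. of_nat (j choose i) * b (Suc i) * e (j - i)) + (\<Sum>i\<le>j. of_nat (j choose Suc i) * b (Suc i) * e (j - i))"
    by (simp add: sum.distrib algebra_simps)
  also have "\<dots> = (\<Sum>i\<le>j. of_nat (j choose i) * b (Suc i) * e (j - i)) + (\<Sum>i\<le>j. of_nat (j choose i) * b i * e (Suc j - i))"
    using A' by simp
  also have "\<dots> = (\<Sum>i\<le>j. of_nat (j choose i) * (b (Suc i) * e (j - i) + b i * e (Suc j - i)))"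
    by (simp add: sum.distrib algebra_simps)
  finally show ?thesis by simp
qed

definition leib :: "(nat \<Rightarrow> real \<Rightarrow> complex) \<Rightarrow> (nat \<Rightarrow> real \<Rightarrow> complex) \<Rightarrow> nat \<Rightarrow> real \<Rightarrow> complex" where
  "leib \<beta> \<eta> j x = (\<Sum>i\<le>j. of_nat (j choose i) * \<beta> i x * \<eta> (j - i) x)"

lemma leib_EB:
  assumes B: "sob_derivs a b k fB \<beta>" and Y: "sob_derivs a b (Suc k) fy \<eta>" and jk: "j \<le> k"
  shows "EB a b (leib \<beta> \<eta> j)"
proof -
  have "EB a b (\<lambda>x. \<Sum>i\<le>j. of_nat (j choose i) * \<beta> i x * \<eta> (j - i) x)"
  proof (rule EB_sum)
    fix i assume i: "i \<in> {..j}"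
    have e1: "EB a b (\<beta> i)" using sob_EB[OF B] i jk by simp
    have e2: "EB a b (\<eta> (j - i))" using sob_EB[OF Y] i jk by simp
    have "EB a b (\<lambda>x. of_nat (j choose i) * (\<beta> i x * \<eta> (j - i) x))"
      by (intro EB_cmult EB_mult e1 e2)
    then show "EB a b (\<lambda>x. of_nat (j choose i) * \<beta> i x * \<eta> (j - i) x)" by (simp add: mult.assoc)
  qed
  then show ?thesis unfolding leib_def .
qed

lemma leibniz:
  assumes ab: "a < b" and B: "sob_derivs a b k fB \<beta>" and Y: "sob_derivs a b (Suc k) fy \<eta>"
  shows "sob_derivs a b k (\<lambda>x. fB x * fy x) (leib \<beta> \<eta>)"
  unfolding sob_derivs_def
proof (intro conjI allI impI ballI)
  fix x assume x: "x \<in> {a..b}"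
  show "leib \<beta> \<eta> 0 x = fB x * fy x" unfolding leib_def using sob_0[OF B x] sob_0[OF Y x] by simp
next
  fix j assume j: "j < k"
  show "leib \<beta> \<eta> (Suc j) absolutely_integrable_on {a..b}"
    by (rule EB_absint[OF leib_EB[OF B Y]]) (use j in simp)
next
  fix j x assume j: "j < k" and x: "x \<in> {a..b}"
  have a: "a \<in> {a..b}" using ab by simp
  define T where "T i t = \<beta> (Suc i) t * \<eta> (j - i) t + \<beta> i t * \<eta> (Suc (j - i)) t" for i t
  have PRi: "\<And>i. i \<le> j \<Longrightarrow> T i absolutely_integrable_on {a..b} \<and>
       (\<forall>x\<in>{a..b}. \<beta> i x * \<eta> (j - i) x = \<beta> i a * \<eta> (j - i) a + integral {a..x} (T i))"
  proof -
    fix i assume i: "i \<le> j"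
    have ik: "i < k" using i j by simp
    have fi: "\<beta> (Suc i) absolutely_integrable_on {a..b}" by (rule sob_int[OF B ik])
    have gc: "continuous_on {a..b} (\<eta> (Suc (j - i)))" by (rule sob_cont[OF Y]) (use i j in simp)
    have hF: "\<forall>x\<in>{a..b}. \<beta> i x = \<beta> i a + integral {a..x} (\<beta> (Suc i))" using sob_eq[OF B ik] by blast
    have hG: "\<forall>x\<in>{a..b}. \<eta> (j - i) x = \<eta> (j - i) a + integral {a..x} (\<eta> (Suc (j - i)))"
    proof -
      have "j - i < Suc k" using j by simp
      then show ?thesis using sob_eq[OF Y] by blast
    qed
    show "T i absolutely_integrable_on {a..b} \<and>
       (\<forall>x\<in>{a..b}. \<beta> i x * \<eta> (j - i) x = \<beta> i a * \<eta> (j - i) a + integral {a..x} (T i))"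
      using PR[OF less_imp_le[OF ab] fi gc hF hG] unfolding T_def by blast
  qed
  have xb: "x \<le> b" using x by simp
  have Tint: "\<And>i. i \<le> j \<Longrightarrow> T i integrable_on {a..x}"
    using PRi by (intro absint_integrable_on absint_sub[OF _ xb]) blast
  have "leib \<beta> \<eta> j x = (\<Sum>i\<le>j. of_nat (j choose i) * (\<beta> i x * \<eta> (j - i) x))"
    unfolding leib_def by (simp add: mult.assoc)
  also have "\<dots> = (\<Sum>i\<le>j. of_nat (j choose i) * (\<beta> i a * \<eta> (j - i) a + integral {a..x} (T i)))"
  proof (rule sum.cong[OF refl])
    fix i assume i: "i \<in> {..j}"
    then have "\<beta> i x * \<eta> (j - i) x = \<beta> i a * \<eta> (j - i) a + integral {a..x} (T i)"
      using PRi[of i] x i by blast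
    then show "of_nat (j choose i) * (\<beta> i x * \<eta> (j - i) x) = of_nat (j choose i) * (\<beta> i a * \<eta> (j - i) a + integral {a..x} (T i))"
      by (simp only:)
  qed
  also have "\<dots> = leib \<beta> \<eta> j a + (\<Sum>i\<le>j. integral {a..x} (\<lambda>t. of_nat (j choose i) * T i t))"
    unfolding leib_def by (simp add: sum.distrib algebra_simps)
  also have "(\<Sum>i\<le>j. integral {a..x} (\<lambda>t. of_nat (j choose i) * T i t)) = integral {a..x} (\<lambda>t. \<Sum>i\<le>j. of_nat (j choose i) * T i t)"
    by (rule integral_sum[symmetric]) (auto intro!: integrable_on_mult_right Tint)
  also have "integral {a..x} (\<lambda>t. \<Sum>i\<le>j. of_nat (j choose i) * T i t) = integral {a..x} (leib \<beta> \<eta> (Suc j))"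
  proof (rule integral_cong)
    fix t
    show "(\<Sum>i\<le>j. of_nat (j choose i) * T i t) = leib \<beta> \<eta> (Suc j) t"
      unfolding leib_def T_def using pascal_sum[of j "\<lambda>i. \<beta> i t" "\<lambda>i. \<eta> i t"]
      by (simp add: Suc_diff_le)
  qed
  finally show "leib \<beta> \<eta> j x = leib \<beta> \<eta> j a + integral {a..x} (leib \<beta> \<eta> (Suc j))" .
next
  have "EB a b (leib \<beta> \<eta> k)" by (rule leib_EB[OF B Y]) simp
  then show "leib \<beta> \<eta> k \<in> borel_measurable (lebesgue_on {a..b})"
    and "\<exists>C. AE x in lebesgue_on {a..b}. norm (leib \<beta> \<eta> k x) \<le> C" unfolding EB_def by blast+
qed

lemma EB_neg: "EB a b f \<Longrightarrow> EB a b (\<lambda>x. - f x)"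
  using EB_cmult[of a b f "-1"] by simp

lemma sob_add:
  assumes g: "sob_derivs a b k f g" and h: "sob_derivs a b k f' h"
  shows "sob_derivs a b k (\<lambda>x. f x + f' x) (\<lambda>j x. g j x + h j x)"
  unfolding sob_derivs_def
proof (intro conjI allI impI ballI)
  fix x assume "x \<in> {a..b}" then show "g 0 x + h 0 x = f x + f' x" using sob_0[OF g] sob_0[OF h] by simp
next
  fix j assume j: "j < k"
  show "(\<lambda>x. g (Suc j) x + h (Suc j) x) absolutely_integrable_on {a..b}"
    by (rule set_integral_add(1)[OF sob_int[OF g j] sob_int[OF h j]])
next
  fix j x assume j: "j < k" and x: "x \<in> {a..b}"
  have "integral {a..x} (\<lambda>t. g (Suc j) t + h (Suc j) t) = integral {a..x} (g (Suc j)) + integral {a..x} (h (Suc j))"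
    using x by (intro integral_add absint_integrable_on absint_sub[OF sob_int[OF g j]] absint_sub[OF sob_int[OF h j]]) auto
  then show "g j x + h j x = g j a + h j a + integral {a..x} (\<lambda>t. g (Suc j) t + h (Suc j) t)"
    using sob_eq[OF g j x] sob_eq[OF h j x] by simp
next
  have "EB a b (\<lambda>x. g k x + h k x)" by (intro EB_add sob_EB[OF g] sob_EB[OF h]) auto
  then show "(\<lambda>x. g k x + h k x) \<in> borel_measurable (lebesgue_on {a..b})"
    and "\<exists>C. AE x in lebesgue_on {a..b}. norm (g k x + h k x) \<le> C" unfolding EB_def by blast+
qed

lemma sob_neg:
  assumes g: "sob_derivs a b k f g"
  shows "sob_derivs a b k (\<lambda>x. - f x) (\<lambda>j x. - g j x)"
  unfolding sob_derivs_def
proof (intro conjI allI impI ballI)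
  fix x assume "x \<in> {a..b}" then show "- g 0 x = - f x" using sob_0[OF g] by simp
next
  fix j assume j: "j < k"
  show "(\<lambda>x. - g (Suc j) x) absolutely_integrable_on {a..b}"
    using set_integrable_mult_right[OF sob_int[OF g j], of "-1"] by simp
next
  fix j x assume j: "j < k" and x: "x \<in> {a..b}"
  have "integral {a..x} (\<lambda>t. - g (Suc j) t) = - integral {a..x} (g (Suc j))"
    by simp
  then show "- g j x = - g j a + integral {a..x} (\<lambda>t. - g (Suc j) t)"
    using sob_eq[OF g j x] by simp
next
  have "EB a b (\<lambda>x. - g k x)" by (intro EB_neg sob_EB[OF g]) auto
  then show "(\<lambda>x. - g k x) \<in> borel_measurable (lebesgue_on {a..b})"
    and "\<exists>C. AE x in lebesgue_on {a..b}. norm (- g k x) \<le> C" unfolding EB_def by blast+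
qed

lemma sob_const: "sob_derivs a b k (\<lambda>x. c) (\<lambda>j x. if j = 0 then c else 0)"
  unfolding sob_derivs_def
proof (intro conjI allI impI ballI)
  show "\<exists>C. AE x in lebesgue_on {a..b}. norm (if k = 0 then c else 0) \<le> C"
    by (intro exI[of _ "norm c"]) (simp add: AE_I2)
  show "(\<lambda>x. if k = 0 then c else 0) \<in> borel_measurable (lebesgue_on {a..b})" by simp
  fix j assume j: "j < k"
  show "(\<lambda>x. if Suc j = 0 then c else 0) absolutely_integrable_on {a..b}" by simp
  fix x
  show "(if j = 0 then c else 0) = (if j = 0 then c else 0) + integral {a..x} (\<lambda>x. if Suc j = 0 then c else 0)"
    by simp
qed simp

lemma sob_sum:
  assumes "finite I" "\<And>i. i \<in> I \<Longrightarrow> sob_derivs a b k (f i) (g i)"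
  shows "sob_derivs a b k (\<lambda>x. \<Sum>i\<in>I. f i x) (\<lambda>j x. \<Sum>i\<in>I. g i j x)"
  using assms
proof (induction I rule: finite_induct)
  case empty
  show ?case using sob_const[of a b k 0] by (simp add: sob_derivs_def)
next
  case (insert i F)
  have "sob_derivs a b k (\<lambda>x. f i x + (\<Sum>i\<in>F. f i x)) (\<lambda>j x. g i j x + (\<Sum>i\<in>F. g i j x))"
    by (rule sob_add) (use insert in auto)
  then show ?case using insert by simp
qed

lemma Wsob_derivs: "Wsob a b k f \<Longrightarrow> sob_derivs a b k f (\<lambda>j. sob_deriv a b k j f)"
  unfolding Wsob_def using sob_some by blast

lemma sob_norm_sum:
  assumes ab: "a < b" and fin: "finite I" and W: "\<And>i. i \<in> I \<Longrightarrow> Wsob a b k (f i)"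
  shows "Wsob a b k (\<lambda>x. \<Sum>i\<in>I. f i x) \<and> sob_norm a b k (\<lambda>x. \<Sum>i\<in>I. f i x) \<le> (\<Sum>i\<in>I. sob_norm a b k (f i))"
proof -
  define g where "g i = (\<lambda>j. sob_deriv a b k j (f i))" for i
  have gi: "\<And>i. i \<in> I \<Longrightarrow> sob_derivs a b k (f i) (g i)" unfolding g_def using Wsob_derivs W by blast
  have S: "sob_derivs a b k (\<lambda>x. \<Sum>i\<in>I. f i x) (\<lambda>j x. \<Sum>i\<in>I. g i j x)" by (rule sob_sum[OF fin gi])
  have "sob_norm a b k (\<lambda>x. \<Sum>i\<in>I. f i x) = (\<Sum>j\<le>k. Linf_norm a b (\<lambda>x. \<Sum>i\<in>I. g i j x))"
    by (rule sob_norm_eq[OF ab S])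
  also have "\<dots> \<le> (\<Sum>j\<le>k. \<Sum>i\<in>I. Linf_norm a b (g i j))"
    by (intro sum_mono Linf_sum[OF ab] sob_EB[OF gi]) auto
  also have "\<dots> = (\<Sum>i\<in>I. \<Sum>j\<le>k. Linf_norm a b (g i j))" by (rule sum.swap)
  also have "\<dots> = (\<Sum>i\<in>I. sob_norm a b k (f i))"
    by (intro sum.cong refl sob_norm_eq[OF ab gi, symmetric])
  finally show ?thesis using S unfolding Wsob_def by blast
qed

lemma le_sum_nonneg:
  fixes h :: "nat \<Rightarrow> real"
  assumes "i \<le> n" "\<And>j. h j \<ge> 0"
  shows "h i \<le> (\<Sum>j\<le>n. h j)"
  using member_le_sum[of i "{..n}" h] assms by auto

lemma sob_norm_prod:
  assumes ab: "a < b" and WB: "Wsob a b k fB" and Wy: "Wsob a b (Suc k) fy"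
  shows "Wsob a b k (\<lambda>x. fB x * fy x) \<and>
    sob_norm a b k (\<lambda>x. fB x * fy x) \<le> real (Suc k * Suc k * 2 ^ k) * sob_norm a b k fB * sob_norm a b (Suc k) fy"
proof -
  define \<beta> where "\<beta> = (\<lambda>j. sob_deriv a b k j fB)"
  define \<eta> where "\<eta> = (\<lambda>j. sob_deriv a b (Suc k) j fy)"
  have B: "sob_derivs a b k fB \<beta>" unfolding \<beta>_def by (rule Wsob_derivs[OF WB])
  have Y: "sob_derivs a b (Suc k) fy \<eta>" unfolding \<eta>_def by (rule Wsob_derivs[OF Wy])
  have L: "sob_derivs a b k (\<lambda>x. fB x * fy x) (leib \<beta> \<eta>)" by (rule leibniz[OF ab B Y])
  define SB where "SB = sob_norm a b k fB"
  define Sy where "Sy = sob_norm a b (Suc k) fy"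
  have SBe: "SB = (\<Sum>i\<le>k. Linf_norm a b (\<beta> i))" unfolding SB_def by (rule sob_norm_eq[OF ab B])
  have Sye: "Sy = (\<Sum>i\<le>Suc k. Linf_norm a b (\<eta> i))" unfolding Sy_def by (rule sob_norm_eq[OF ab Y])
  have SB0: "SB \<ge> 0" and Sy0: "Sy \<ge> 0" unfolding SB_def Sy_def by (auto intro: sob_norm_nonneg ab)
  have bB: "\<And>i. i \<le> k \<Longrightarrow> Linf_norm a b (\<beta> i) \<le> SB"
    unfolding SBe by (rule le_sum_nonneg) (auto intro: Linf_nonneg ab)
  have bY: "\<And>i. i \<le> Suc k \<Longrightarrow> Linf_norm a b (\<eta> i) \<le> Sy"
    unfolding Sye by (rule le_sum_nonneg) (auto intro: Linf_nonneg ab)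
  have lj: "Linf_norm a b (leib \<beta> \<eta> j) \<le> real (Suc k * 2 ^ k) * SB * Sy" if jk: "j \<le> k" for j
  proof -
    have EBt: "\<And>i. i \<le> j \<Longrightarrow> EB a b (\<lambda>x. \<beta> i x * \<eta> (j - i) x)"
      using jk by (intro EB_mult sob_EB[OF B] sob_EB[OF Y]) auto
    have "Linf_norm a b (leib \<beta> \<eta> j) = Linf_norm a b (\<lambda>x. \<Sum>i\<le>j. of_nat (j choose i) * (\<beta> i x * \<eta> (j - i) x))"
      unfolding leib_def by (simp add: mult.assoc)
    also have "\<dots> \<le> (\<Sum>i\<le>j. Linf_norm a b (\<lambda>x. of_nat (j choose i) * (\<beta> i x * \<eta> (j - i) x)))"
      by (rule Linf_sum[OF ab]) (auto intro: EB_cmult EBt)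
    also have "\<dots> \<le> (\<Sum>i\<le>j. real (2 ^ k) * SB * Sy)"
    proof (rule sum_mono)
      fix i assume i: "i \<in> {..j}"
      then have ij: "i \<le> j" by simp
      have "Linf_norm a b (\<lambda>x. of_nat (j choose i) * (\<beta> i x * \<eta> (j - i) x))
          \<le> norm (of_nat (j choose i) :: complex) * Linf_norm a b (\<lambda>x. \<beta> i x * \<eta> (j - i) x)"
        by (rule Linf_cmult[OF ab EBt[OF ij]])
      also have "\<dots> \<le> real (2 ^ k) * (Linf_norm a b (\<beta> i) * Linf_norm a b (\<eta> (j - i)))"
      proof (rule mult_mono)
        have "j choose i \<le> 2 ^ j" by (rule binomial_le_pow2)
        also have "(2::nat) ^ j \<le> 2 ^ k" using jk by (simp add: power_increasing)
        finally show "norm (of_nat (j choose i) :: complex) \<le> real (2 ^ k)" by simp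
        show "Linf_norm a b (\<lambda>x. \<beta> i x * \<eta> (j - i) x) \<le> Linf_norm a b (\<beta> i) * Linf_norm a b (\<eta> (j - i))"
          using ij jk by (intro Linf_mult[OF ab] sob_EB[OF B] sob_EB[OF Y]) auto
        show "0 \<le> real (2 ^ k)" by simp
        show "0 \<le> Linf_norm a b (\<lambda>x. \<beta> i x * \<eta> (j - i) x)" by (rule Linf_nonneg[OF ab])
      qed
      also have "\<dots> \<le> real (2 ^ k) * (SB * Sy)"
        using ij jk by (intro mult_left_mono mult_mono bB bY Linf_nonneg[OF ab] SB0) auto
      finally show "Linf_norm a b (\<lambda>x. of_nat (j choose i) * (\<beta> i x * \<eta> (j - i) x)) \<le> real (2 ^ k) * SB * Sy"
        by (simp add: mult.assoc)
    qed
    also have "\<dots> = real (Suc j) * (real (2 ^ k) * SB * Sy)" by simp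
    also have "\<dots> \<le> real (Suc k) * (real (2 ^ k) * SB * Sy)"
      using jk SB0 Sy0 by (intro mult_right_mono) auto
    also have "\<dots> = real (Suc k * 2 ^ k) * SB * Sy" by (simp add: algebra_simps)
    finally show ?thesis .
  qed
  have "sob_norm a b k (\<lambda>x. fB x * fy x) = (\<Sum>j\<le>k. Linf_norm a b (leib \<beta> \<eta> j))"
    by (rule sob_norm_eq[OF ab L])
  also have "\<dots> \<le> (\<Sum>j\<le>k. real (Suc k * 2 ^ k) * SB * Sy)"
    by (rule sum_mono) (use lj in auto)
  also have "\<dots> = real (Suc k * Suc k * 2 ^ k) * SB * Sy" by (simp add: algebra_simps)
  finally show ?thesis using L unfolding Wsob_def SB_def Sy_def by blast
qed

lemma mv_axis: "((M::complex^'m^'m) *v axis j 1) $ i = M $ i $ j"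
  by (simp add: matrix_vector_mult_def axis_def if_distrib sum.delta' cong: if_cong)

lemma mv_nth: "((M::complex^'m^'m) *v v) $ i = (\<Sum>j\<in>UNIV. M $ i $ j * v $ j)"
  by (simp add: matrix_vector_mult_def)

lemma Lop_diff: "Lop a b n A y x - Lop a b n A' y x = (A x - A' x) *v y x"
  unfolding Lop_def by (simp add: matrix_vector_mult_diff_rdistrib)

lemma vnorm_nonneg: "a < b \<Longrightarrow> vnorm a b k y \<ge> 0"
  unfolding vnorm_def by (intro sum_nonneg sob_norm_nonneg)

lemma mnorm_nonneg: "a < b \<Longrightarrow> mnorm a b k B \<ge> 0"
  unfolding mnorm_def by (intro sum_nonneg sob_norm_nonneg)

lemma Wsob_const: "Wsob a b k (\<lambda>x. c)"
  unfolding Wsob_def using sob_const by blast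

lemma sob_norm_const: assumes ab: "a < b" shows "sob_norm a b k (\<lambda>x. c) \<le> norm c"
proof -
  have "sob_norm a b k (\<lambda>x. c) = (\<Sum>l\<le>k. Linf_norm a b (\<lambda>x. if l = 0 then c else 0))"
    by (rule sob_norm_eq[OF ab sob_const])
  also have "\<dots> \<le> (\<Sum>l\<le>k. if l = 0 then norm c else 0)"
  proof (rule sum_mono)
    fix l
    show "Linf_norm a b (\<lambda>x. if l = 0 then c else 0) \<le> (if l = 0 then norm c else 0)"
      using Linf_const[OF ab, of "if l = 0 then c else 0"] by (cases "l = 0") auto
  qed
  also have "\<dots> = norm c" by (simp add: sum.delta')
  finally show ?thesis .
qed

lemma ej_W: "vW a b n (\<lambda>x. axis j (1::complex))"
  unfolding vW_def by (auto intro: Wsob_const)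

lemma ej_norm: assumes ab: "a < b" shows "vnorm a b n (\<lambda>x. axis j (1::complex)) \<le> 1"
proof -
  have "vnorm a b n (\<lambda>x. axis j (1::complex)) \<le> (\<Sum>i\<in>UNIV. norm (axis j (1::complex) $ i))"
    unfolding vnorm_def by (intro sum_mono sob_norm_const[OF ab])
  also have "\<dots> = 1" by (simp add: axis_def sum.delta' if_distrib cong: if_cong)
  finally show ?thesis .
qed

lemma mnorm_cols: "mnorm a b k B = (\<Sum>j\<in>UNIV. vnorm a b k (\<lambda>x. B x *v axis j 1))"
  unfolding mnorm_def vnorm_def mv_axis by (rule sum.swap)

lemma le_sum_nonneg2:
  fixes h :: "'i::finite \<Rightarrow> real"
  assumes "\<And>j. h j \<ge> 0"
  shows "h i \<le> (\<Sum>j\<in>UNIV. h j)"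
  using member_le_sum[of i UNIV h] assms by auto

lemma vec_bound:
  fixes B :: "real \<Rightarrow> complex^'m^'m" and y :: "real \<Rightarrow> complex^'m"
  assumes ab: "a < b" and mB: "mW a b k B" and vy: "vW a b (Suc k) y"
  shows "vnorm a b k (\<lambda>x. B x *v y x) \<le> real (Suc k * Suc k * 2 ^ k) * mnorm a b k B * vnorm a b (Suc k) y"
proof -
  let ?K = "real (Suc k * Suc k * 2 ^ k)"
  have yj: "sob_norm a b (Suc k) (\<lambda>x. y x $ j) \<le> vnorm a b (Suc k) y" for j
    unfolding vnorm_def by (rule le_sum_nonneg2) (rule sob_norm_nonneg[OF ab])
  have comp: "sob_norm a b k (\<lambda>x. (B x *v y x) $ i) \<le> (\<Sum>j\<in>UNIV. ?K * sob_norm a b k (\<lambda>x. B x $ i $ j) * vnorm a b (Suc k) y)" for i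
  proof -
    have P: "\<And>j. Wsob a b k (\<lambda>x. B x $ i $ j * y x $ j) \<and>
      sob_norm a b k (\<lambda>x. B x $ i $ j * y x $ j) \<le> ?K * sob_norm a b k (\<lambda>x. B x $ i $ j) * sob_norm a b (Suc k) (\<lambda>x. y x $ j)"
      using mB vy unfolding mW_def vW_def by (intro sob_norm_prod[OF ab]) auto
    have "sob_norm a b k (\<lambda>x. (B x *v y x) $ i) = sob_norm a b k (\<lambda>x. \<Sum>j\<in>UNIV. B x $ i $ j * y x $ j)"
      by (simp add: mv_nth)
    also have "\<dots> \<le> (\<Sum>j\<in>UNIV. sob_norm a b k (\<lambda>x. B x $ i $ j * y x $ j))"
      using sob_norm_sum[OF ab, of UNIV k "\<lambda>j x. B x $ i $ j * y x $ j"] P by auto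
    also have "\<dots> \<le> (\<Sum>j\<in>UNIV. ?K * sob_norm a b k (\<lambda>x. B x $ i $ j) * vnorm a b (Suc k) y)"
    proof (rule sum_mono)
      fix j
      have "?K * sob_norm a b k (\<lambda>x. B x $ i $ j) \<ge> 0" using sob_norm_nonneg[OF ab] by simp
      then have "?K * sob_norm a b k (\<lambda>x. B x $ i $ j) * sob_norm a b (Suc k) (\<lambda>x. y x $ j)
          \<le> ?K * sob_norm a b k (\<lambda>x. B x $ i $ j) * vnorm a b (Suc k) y"
        by (rule mult_left_mono[OF yj])
      then show "sob_norm a b k (\<lambda>x. B x $ i $ j * y x $ j) \<le> ?K * sob_norm a b k (\<lambda>x. B x $ i $ j) * vnorm a b (Suc k) y"
        using P[of j] by linarith
    qed
    finally show ?thesis .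
  qed
  have "vnorm a b k (\<lambda>x. B x *v y x) = (\<Sum>i\<in>UNIV. sob_norm a b k (\<lambda>x. (B x *v y x) $ i))"
    by (simp add: vnorm_def)
  also have "\<dots> \<le> (\<Sum>i\<in>UNIV. \<Sum>j\<in>UNIV. ?K * sob_norm a b k (\<lambda>x. B x $ i $ j) * vnorm a b (Suc k) y)"
    by (intro sum_mono comp)
  also have "\<dots> = ?K * mnorm a b k B * vnorm a b (Suc k) y"
    unfolding mnorm_def by (simp add: sum_distrib_left sum_distrib_right mult.assoc)
  finally show ?thesis .
qed

lemma op_upper:
  assumes "\<And>y. vW a b n y \<Longrightarrow> vnorm a b (n - 1) (T y) \<le> C * vnorm a b n y" and "C \<ge> 0"
  shows "opnorm a b n T \<le> ereal C"
  unfolding opnorm_def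
proof (rule Sup_least)
  fix e assume "e \<in> {ereal (vnorm a b (n - 1) (T y)) |y. vW a b n y \<and> vnorm a b n y \<le> 1}"
  then obtain y where e: "e = ereal (vnorm a b (n - 1) (T y))" and y: "vW a b n y" "vnorm a b n y \<le> 1" by blast
  have "vnorm a b (n - 1) (T y) \<le> C * vnorm a b n y" by (rule assms(1)[OF y(1)])
  also have "\<dots> \<le> C * 1" by (rule mult_left_mono[OF y(2) assms(2)])
  finally show "e \<le> ereal C" unfolding e by simp
qed

lemma op_lower:
  assumes "vW a b n y" "vnorm a b n y \<le> 1"
  shows "ereal (vnorm a b (n - 1) (T y)) \<le> opnorm a b n T"
  unfolding opnorm_def by (rule Sup_upper) (use assms in blast)

lemma mW_diff:
  assumes "mW a b k A1" "mW a b k A2"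
  shows "mW a b k (\<lambda>x. A1 x - A2 x)"
  unfolding mW_def
proof (intro allI)
  fix i j
  obtain g h where g: "sob_derivs a b k (\<lambda>x. A1 x $ i $ j) g" and h: "sob_derivs a b k (\<lambda>x. A2 x $ i $ j) h"
    using assms unfolding mW_def Wsob_def by blast
  have "sob_derivs a b k (\<lambda>x. A1 x $ i $ j + - (A2 x $ i $ j)) (\<lambda>l x. g l x + - h l x)"
    by (rule sob_add[OF g sob_neg[OF h]])
  then show "Wsob a b k (\<lambda>x. (A1 x - A2 x) $ i $ j)" unfolding Wsob_def by auto
qed

theorem lemma5:
  fixes a b \<epsilon>0 :: real and n :: nat and A :: "real \<Rightarrow> real \<Rightarrow> complex^'m^'m"
  assumes "a < b" and "n \<ge> 1" and "\<epsilon>0 > 0"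
    and "\<forall>\<epsilon>\<in>{0..<\<epsilon>0}. mW a b (n - 1) (A \<epsilon>)"
  shows "(((\<lambda>\<epsilon>. mnorm a b (n - 1) (\<lambda>x. A \<epsilon> x - A 0 x)) \<longlongrightarrow> 0) (at_right 0)
           \<longleftrightarrow> ((\<lambda>\<epsilon>. opnorm a b n (\<lambda>y x. Lop a b n (A \<epsilon>) y x - Lop a b n (A 0) y x)) \<longlongrightarrow> 0) (at_right 0))
       \<and> (((\<lambda>\<epsilon>. opnorm a b n (\<lambda>y x. Lop a b n (A \<epsilon>) y x - Lop a b n (A 0) y x)) \<longlongrightarrow> 0) (at_right 0)
           \<longleftrightarrow> (\<forall>y. vW a b n y \<longrightarrow>
                 ((\<lambda>\<epsilon>. vnorm a b (n - 1) (\<lambda>x. Lop a b n (A \<epsilon>) y x - Lop a b n (A 0) y x)) \<longlongrightarrow> 0) (at_right 0)))"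
proof -
  note ab = assms(1)
  obtain k where nk: "n = Suc k" using assms(2) by (cases n) auto
  then have k: "n - 1 = k" by simp
  let ?K = "real (Suc k * Suc k * 2 ^ k)"
  let ?mn = "\<lambda>\<epsilon>. mnorm a b (n - 1) (\<lambda>x. A \<epsilon> x - A 0 x)"
  let ?T = "\<lambda>\<epsilon>. (\<lambda>y x. Lop a b n (A \<epsilon>) y x - Lop a b n (A 0) y x)"
  let ?op = "\<lambda>\<epsilon>. opnorm a b n (?T \<epsilon>)"
  let ?e = "\<lambda>j. (\<lambda>x::real. axis j (1::complex))"
  have Teq: "\<And>\<epsilon> y. ?T \<epsilon> y = (\<lambda>x. (A \<epsilon> x - A 0 x) *v y x)" by (simp add: Lop_diff)
  have K0: "?K \<ge> 0" by simp
  have ev: "eventually (\<lambda>\<epsilon>. \<epsilon> \<in> {0<..<\<epsilon>0}) (at_right 0)"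
    by (rule eventually_at_right_real[OF assms(3)])
  have mWe: "\<And>\<epsilon>. \<epsilon> \<in> {0<..<\<epsilon>0} \<Longrightarrow> mW a b k (\<lambda>x. A \<epsilon> x - A 0 x)"
    using assms(3,4) k by (intro mW_diff) auto
  have F1: "\<And>\<epsilon> y. \<epsilon> \<in> {0<..<\<epsilon>0} \<Longrightarrow> vW a b n y \<Longrightarrow>
      vnorm a b (n - 1) (?T \<epsilon> y) \<le> ?K * ?mn \<epsilon> * vnorm a b n y"
  proof -
    fix \<epsilon> and y :: "real \<Rightarrow> complex^'m" assume e: "\<epsilon> \<in> {0<..<\<epsilon>0}" and y: "vW a b n y"
    have "vnorm a b (n - 1) (?T \<epsilon> y) = vnorm a b k (\<lambda>x. (A \<epsilon> x - A 0 x) *v y x)"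
      by (simp only: Teq k)
    also have "\<dots> \<le> ?K * mnorm a b k (\<lambda>x. A \<epsilon> x - A 0 x) * vnorm a b (Suc k) y"
      by (rule vec_bound[OF ab mWe[OF e]]) (use y nk in simp)
    finally show "vnorm a b (n - 1) (?T \<epsilon> y) \<le> ?K * ?mn \<epsilon> * vnorm a b n y"
      by (simp add: nk)
  qed
  have F2: "\<And>\<epsilon>. \<epsilon> \<in> {0<..<\<epsilon>0} \<Longrightarrow> ?op \<epsilon> \<le> ereal (?K * ?mn \<epsilon>)"
  proof -
    fix \<epsilon> assume e: "\<epsilon> \<in> {0<..<\<epsilon>0}"
    show "?op \<epsilon> \<le> ereal (?K * ?mn \<epsilon>)"
    proof (rule op_upper)
      show "0 \<le> ?K * ?mn \<epsilon>" by (rule mult_nonneg_nonneg[OF K0 mnorm_nonneg[OF ab]])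
      fix y :: "real \<Rightarrow> complex^'m" assume "vW a b n y"
      then show "vnorm a b (n - 1) (?T \<epsilon> y) \<le> ?K * ?mn \<epsilon> * vnorm a b n y" by (rule F1[OF e])
    qed
  qed
  have F3: "\<And>\<epsilon>. ?mn \<epsilon> = (\<Sum>j\<in>UNIV. vnorm a b (n - 1) (?T \<epsilon> (?e j)))"
    unfolding Teq by (rule mnorm_cols)
  have F4: "\<And>\<epsilon> j. ereal (vnorm a b (n - 1) (?T \<epsilon> (?e j))) \<le> ?op \<epsilon>"
    by (rule op_lower[OF ej_W ej_norm[OF ab]])
  have F5: "\<And>\<epsilon>. 0 \<le> ?op \<epsilon>"
  proof -
    fix \<epsilon>
    have "ereal 0 \<le> ereal (vnorm a b (n - 1) (?T \<epsilon> (?e undefined)))" using vnorm_nonneg[OF ab] by simp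
    also have "\<dots> \<le> ?op \<epsilon>" by (rule F4)
    finally show "0 \<le> ?op \<epsilon>" by (simp add: zero_ereal_def)
  qed
  have I_a1: "(?mn \<longlongrightarrow> 0) (at_right 0) \<Longrightarrow> (?op \<longlongrightarrow> 0) (at_right 0)"
  proof -
    assume h: "(?mn \<longlongrightarrow> 0) (at_right 0)"
    have "((\<lambda>\<epsilon>. ereal (?K * ?mn \<epsilon>)) \<longlongrightarrow> ereal (?K * 0)) (at_right 0)"
      by (intro tendsto_ereal tendsto_mult tendsto_const h)
    then have up: "((\<lambda>\<epsilon>. ereal (?K * ?mn \<epsilon>)) \<longlongrightarrow> 0) (at_right 0)" by (simp add: zero_ereal_def)
    show ?thesis
      by (rule tendsto_sandwich[OF _ _ tendsto_const up])
         (use F5 F2 ev in \<open>auto elim!: eventually_mono\<close>)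
  qed
  have ej_lim: "((\<lambda>\<epsilon>. vnorm a b (n - 1) (?T \<epsilon> (?e j))) \<longlongrightarrow> 0) (at_right 0)"
    if h: "(?op \<longlongrightarrow> 0) (at_right 0)" for j
  proof -
    have "((\<lambda>\<epsilon>. ereal (vnorm a b (n - 1) (?T \<epsilon> (?e j)))) \<longlongrightarrow> 0) (at_right 0)"
      by (rule tendsto_sandwich[OF _ _ tendsto_const h])
         (use F4 vnorm_nonneg[OF ab] in \<open>auto intro!: always_eventually simp: zero_ereal_def\<close>)
    then show ?thesis by (simp add: zero_ereal_def)
  qed
  have sum_lim: "(?mn \<longlongrightarrow> 0) (at_right 0)"
    if h: "\<And>j. ((\<lambda>\<epsilon>. vnorm a b (n - 1) (?T \<epsilon> (?e j))) \<longlongrightarrow> 0) (at_right 0)"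
  proof -
    have "((\<lambda>\<epsilon>. \<Sum>j\<in>UNIV. vnorm a b (n - 1) (?T \<epsilon> (?e j))) \<longlongrightarrow> 0) (at_right 0)"
      by (rule tendsto_null_sum) (rule h)
    then show ?thesis unfolding F3 .
  qed
  have a1_I: "(?op \<longlongrightarrow> 0) (at_right 0) \<Longrightarrow> (?mn \<longlongrightarrow> 0) (at_right 0)"
    using ej_lim sum_lim by blast
  have I_a2: "(?mn \<longlongrightarrow> 0) (at_right 0) \<Longrightarrow>
      (\<forall>y. vW a b n y \<longrightarrow> ((\<lambda>\<epsilon>. vnorm a b (n - 1) (?T \<epsilon> y)) \<longlongrightarrow> 0) (at_right 0))"
  proof (intro allI impI)
    fix y :: "real \<Rightarrow> complex^'m" assume h: "(?mn \<longlongrightarrow> 0) (at_right 0)" and y: "vW a b n y"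
    have up: "((\<lambda>\<epsilon>. ?K * ?mn \<epsilon> * vnorm a b n y) \<longlongrightarrow> ?K * 0 * vnorm a b n y) (at_right 0)"
      by (intro tendsto_mult tendsto_const h)
    show "((\<lambda>\<epsilon>. vnorm a b (n - 1) (?T \<epsilon> y)) \<longlongrightarrow> 0) (at_right 0)"
      by (rule tendsto_sandwich[OF _ _ tendsto_const]) 
         (use up F1 y ev vnorm_nonneg[OF ab] in \<open>auto elim!: eventually_mono\<close>)
  qed
  have a2_I: "(\<forall>y. vW a b n y \<longrightarrow> ((\<lambda>\<epsilon>. vnorm a b (n - 1) (?T \<epsilon> y)) \<longlongrightarrow> 0) (at_right 0)) \<Longrightarrow>
      (?mn \<longlongrightarrow> 0) (at_right 0)"
  proof -
    assume h: "\<forall>y. vW a b n y \<longrightarrow> ((\<lambda>\<epsilon>. vnorm a b (n - 1) (?T \<epsilon> y)) \<longlongrightarrow> 0) (at_right 0)"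
    show ?thesis by (rule sum_lim) (use h ej_W in blast)
  qed
  show ?thesis using I_a1 a1_I I_a2 a2_I by blast
qed

end
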